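(* Let $G$ be a connected $r$-regular finite simple graph on $n$ vertices, and let the spectrum of its adjacency matrix $A_G$ be $r,\lambda_2,\lambda_3,\dots,\lambda_n$ (listed with multiplicity, not necessarily distinct). Let $m$ be the maximum multiplicity of a value in the list $\lambda_2,\dots,\lambda_n$. Then $\mathrm{mur}(G)=n-(m+1)$.
   Context: For a finite simple undirected graph $G$ on vertices $v_1,\dots,v_n$, let $A_G$ be its $(0,1)$-adjacency matrix, $D_G=\mathrm{diag}(d_1,\dots,d_n)$ with $d_i$ the degree of $v_i$, $I$ the $n\times n$ identity matrix and $J$ the $n\times n$ all-ones matrix. A universal adjacency matrix of $G$ is any matrix $\alpha A_G+\beta I+\gamma J+\delta D_G$ with real scalars $\alpha,\beta,\gamma,\delta$ and $\alpha\neq 0$. The minimum universal rank $\mathrm{mur}(G)$ is the minimum rank over all universal adjacency matrices of $G$. *)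

theory Defs
  imports "HOL-Analysis.Analysis" "HOL-Computational_Algebra.Polynomial"
begin

definition simple_graph :: "('n::finite \<Rightarrow> 'n \<Rightarrow> bool) \<Rightarrow> bool" where
  "simple_graph E \<longleftrightarrow> (\<forall>i j. E i j \<longrightarrow> E j i) \<and> (\<forall>i. \<not> E i i)"

definition degree :: "('n::finite \<Rightarrow> 'n \<Rightarrow> bool) \<Rightarrow> 'n \<Rightarrow> nat" where
  "degree E i = card {j. E i j}"

definition regular :: "('n::finite \<Rightarrow> 'n \<Rightarrow> bool) \<Rightarrow> nat \<Rightarrow> bool" where
  "regular E r \<longleftrightarrow> (\<forall>i. degree E i = r)"

definition connected_graph :: "('n::finite \<Rightarrow> 'n \<Rightarrow> bool) \<Rightarrow> bool" where
  "connected_graph E \<longleftrightarrow> (\<forall>i j. E\<^sup>*\<^sup>* i j)"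

definition adj_matrix :: "('n::finite \<Rightarrow> 'n \<Rightarrow> bool) \<Rightarrow> real^'n^'n" where
  "adj_matrix E = (\<chi> i j. if E i j then 1 else 0)"

definition deg_matrix :: "('n::finite \<Rightarrow> 'n \<Rightarrow> bool) \<Rightarrow> real^'n^'n" where
  "deg_matrix E = (\<chi> i j. if i = j then real (degree E i) else 0)"

definition ones_matrix :: "real^'n::finite^'n" where
  "ones_matrix = (\<chi> i j. 1)"

definition universal_adj :: "('n::finite \<Rightarrow> 'n \<Rightarrow> bool) \<Rightarrow> real \<Rightarrow> real \<Rightarrow> real \<Rightarrow> real \<Rightarrow> real^'n^'n" where
  "universal_adj E \<alpha> \<beta> \<gamma> \<delta> =
     \<alpha> *\<^sub>R adj_matrix E + \<beta> *\<^sub>R mat 1 + \<gamma> *\<^sub>R ones_matrix + \<delta> *\<^sub>R deg_matrix E"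

text \<open>Minimum universal rank: minimum rank over all universal adjacency matrices
  (alpha nonzero).  The set of ranks is a nonempty set of naturals bounded by CARD('n).\<close>
definition mur :: "('n::finite \<Rightarrow> 'n \<Rightarrow> bool) \<Rightarrow> nat" where
  "mur E = Min {rank (universal_adj E \<alpha> \<beta> \<gamma> \<delta>) | \<alpha> \<beta> \<gamma> \<delta>. \<alpha> \<noteq> 0}"

definition charpoly :: "real^'n::finite^'n \<Rightarrow> real poly" where
  "charpoly A = det (\<chi> i j. (if i = j then [:0, 1:] else 0) - [:A $ i $ j:])"

end

theory Submission
  imports Defs
begin


lemma sym_mv:
  fixes A :: "real^'n^'n"
  assumes "transpose A = A"
  shows "(A *v x) \<bullet> y = x \<bullet> (A *v y)"
proof -
  have "A *v x = x v* A"
    using assms unfolding vector_matrix_mult_def matrix_vector_mult_def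
    by (metis (no_types, lifting) mult.commute sum.cong transpose_def vec_lambda_beta)
  then show ?thesis by (simp add: dot_lmul_matrix)
qed

lemma exp1:
  fixes A :: "real^'n^'n"
  assumes "v \<bullet> (A *v w) = w \<bullet> (A *v v)"
  shows "(v + t *\<^sub>R w) \<bullet> (A *v (v + t *\<^sub>R w)) = v \<bullet> (A *v v) + 2 * t * (w \<bullet> (A *v v)) + t^2 * (w \<bullet> (A *v w))"
proof -
  have "A *v (v + t *\<^sub>R w) = A *v v + t *\<^sub>R (A *v w)"
    by (simp add: matrix_vector_right_distrib matrix_scaleR_vector_ac scaleR_matrix_vector_assoc)
  then show ?thesis using assms
    by (simp add: inner_add_left inner_add_right power2_eq_square inner_commute[of "A *v v" w] distrib_left)
qed
lemma exp2:
  fixes v w :: "real^'n"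
  shows "(v + t *\<^sub>R w) \<bullet> (v + t *\<^sub>R w) = v \<bullet> v + 2 * t * (v \<bullet> w) + t^2 * (w \<bullet> w)"
  by (simp add: inner_add_left inner_add_right power2_eq_square inner_commute[of w v] distrib_left)

lemma quad_aux:
  fixes b c :: real
  assumes "c \<ge> 0" "\<And>t. 2 * t * b \<le> t^2 * c"
  shows "b = 0"
proof -
  define t where "t = b / (c + 1)"
  have bt: "b = t * (c + 1)" unfolding t_def using assms(1) by simp
  have "2 * t * b \<le> t^2 * c" by (rule assms(2))
  hence "t^2 * (c + 2) \<le> 0" unfolding bt by (simp add: power2_eq_square algebra_simps)
  moreover have "c + 2 > 0" using assms(1) by simp
  ultimately have "t^2 \<le> 0" by (simp add: mult_le_0_iff)
  hence "t = 0" by simp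
  then show ?thesis using bt by simp
qed

lemma spectral_subspace:
  fixes A :: "real^'n^'n"
  assumes sym: "transpose A = A"
  shows "subspace U \<Longrightarrow> (\<forall>x\<in>U. A *v x \<in> U) \<Longrightarrow>
    \<exists>B. B \<subseteq> U \<and> pairwise orthogonal B \<and> (\<forall>x\<in>B. norm x = 1 \<and> (\<exists>c. A *v x = c *\<^sub>R x)) \<and> U \<subseteq> span B"
proof (induction "dim U" arbitrary: U rule: less_induct)
  case less
  show ?case
  proof (cases "U \<subseteq> {0}")
    case True
    then show ?thesis by (intro exI[of _ "{}"]) auto
  next
    case False
    then obtain x where x: "x \<in> U" "x \<noteq> 0" by auto
    define S where "S = sphere 0 1 \<inter> U"
    have cS: "compact S" unfolding S_def
      by (simp add: closed_subspace compact_Int_closed less.prems(1))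
    have neS: "S \<noteq> {}"
    proof -
      have "(1 / norm x) *\<^sub>R x \<in> S" unfolding S_def using x less.prems(1)
        by (simp add: subspace_scale)
      then show ?thesis by auto
    qed
    have coS: "continuous_on S (\<lambda>y. y \<bullet> (A *v y))"
      by (intro continuous_on_inner continuous_on_id linear_continuous_on matrix_vector_mul_bounded_linear) 
    obtain v where v: "v \<in> S" and vmax: "\<And>y. y \<in> S \<Longrightarrow> y \<bullet> (A *v y) \<le> v \<bullet> (A *v v)"
      using continuous_attains_sup[OF cS neS coS] by blast
    define \<mu> where "\<mu> = v \<bullet> (A *v v)"
    have vU: "v \<in> U" and vn: "norm v = 1" using v unfolding S_def by auto
    have vv: "v \<bullet> v = 1" using vn by (simp add: norm_eq_1)
    have bound: "y \<bullet> (A *v y) \<le> \<mu> * (y \<bullet> y)" if "y \<in> U" for y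
    proof (cases "y = 0")
      case True then show ?thesis by simp
    next
      case False
      let ?z = "(1 / norm y) *\<^sub>R y"
      have "?z \<in> S" unfolding S_def using that False less.prems(1)
        by (simp add: subspace_scale)
      hence "?z \<bullet> (A *v ?z) \<le> \<mu>" using vmax \<mu>_def by blast
      hence "(y \<bullet> (A *v y)) / (norm y)^2 \<le> \<mu>"
        by (simp add: matrix_scaleR_vector_ac scaleR_matrix_vector_assoc[symmetric] power2_eq_square)
      moreover have "(norm y)^2 > 0" using False by simp
      ultimately show ?thesis by (simp add: divide_le_eq power2_norm_eq_inner)
    qed
    define z where "z = A *v v - \<mu> *\<^sub>R v"
    have zU: "z \<in> U" unfolding z_def using vU less.prems
      by (simp add: subspace_diff subspace_scale)
    have zero: "w \<bullet> z = 0" if wU: "w \<in> U" for w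
    proof -
      let ?b = "w \<bullet> z" and ?c = "\<mu> * (w \<bullet> w) - w \<bullet> (A *v w)"
      have c0: "?c \<ge> 0" using bound[OF wU] by simp
      have "2 * t * ?b \<le> t^2 * ?c" for t
      proof -
        have "v + t *\<^sub>R w \<in> U" using vU wU less.prems(1) by (simp add: subspace_add subspace_scale)
        from bound[OF this] have "(v + t *\<^sub>R w) \<bullet> (A *v (v + t *\<^sub>R w)) \<le> \<mu> * ((v + t *\<^sub>R w) \<bullet> (v + t *\<^sub>R w))" .
        moreover have "v \<bullet> (A *v w) = w \<bullet> (A *v v)"
          using sym_mv[OF sym, of v w] by (simp add: inner_commute)
        ultimately show ?thesis
          unfolding z_def exp1[of v A w t, OF \<open>v \<bullet> (A *v w) = w \<bullet> (A *v v)\<close>] exp2 using vv \<mu>_def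
          by (simp add: inner_diff_right inner_commute[of w v] algebra_simps)
      qed
      then show ?thesis using quad_aux[OF c0] by blast
    qed
    have Av: "A *v v = \<mu> *\<^sub>R v"
      using zero[OF zU] unfolding z_def by simp
    define U' where "U' = U \<inter> {y. orthogonal v y}"
    have sU': "subspace U'" unfolding U'_def
      using less.prems(1) subspace_orthogonal_to_vector[of v] by (rule subspace_inter)
    have invU': "\<forall>y\<in>U'. A *v y \<in> U'"
    proof
      fix y assume y: "y \<in> U'"
      have "v \<bullet> (A *v y) = \<mu> * (v \<bullet> y)"
        using sym_mv[OF sym, of v y] Av by simp
      then show "A *v y \<in> U'" using y less.prems(2) unfolding U'_def orthogonal_def by auto
    qed
    have "dim U' < dim U"
    proof -
      have e1: "span U' = U'" using sU' by (simp add: span_eq_iff)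
      have e2: "span U = U" using less.prems(1) by (simp add: span_eq_iff)
      have "v \<notin> U'" using vv unfolding U'_def orthogonal_def by auto
      hence "U' \<subset> U" using vU unfolding U'_def by auto
      hence "span U' \<subset> span U" unfolding e1 e2 .
      then show ?thesis by (metis dim_psubset)
    qed
    from less.hyps[OF this sU' invU'] obtain B' where
      B': "B' \<subseteq> U'" "pairwise orthogonal B'" "\<forall>x\<in>B'. norm x = 1 \<and> (\<exists>c. A *v x = c *\<^sub>R x)" "U' \<subseteq> span B'"
      by blast
    show ?thesis
    proof (intro exI[of _ "insert v B'"] conjI)
      show "insert v B' \<subseteq> U" using B'(1) vU unfolding U'_def by auto
      show "pairwise orthogonal (insert v B')"
        using B'(1,2) unfolding U'_def by (intro pairwise_orthogonal_insert) auto
      show "\<forall>x\<in>insert v B'. norm x = 1 \<and> (\<exists>c. A *v x = c *\<^sub>R x)" using B'(3) vn Av by auto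
      show "U \<subseteq> span (insert v B')"
      proof
        fix y assume y: "y \<in> U"
        have "y - (v \<bullet> y) *\<^sub>R v \<in> U'" unfolding U'_def orthogonal_def
          using y vU less.prems(1) vv by (simp add: subspace_diff subspace_scale inner_diff_right)
        hence "y - (v \<bullet> y) *\<^sub>R v \<in> span (insert v B')" using B'(4) span_mono[of B' "insert v B'"] by auto
        moreover have "(v \<bullet> y) *\<^sub>R v \<in> span (insert v B')" by (simp add: span_base span_scale)
        ultimately have "(y - (v \<bullet> y) *\<^sub>R v) + (v \<bullet> y) *\<^sub>R v \<in> span (insert v B')" by (rule span_add)
        then show "y \<in> span (insert v B')" by simp
      qed
    qed
  qed
qed



definition colmat :: "('n::finite \<Rightarrow> real^'n) \<Rightarrow> real^'n^'n" where
  "colmat g = (\<chi> i j. g j $ i)"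

definition dmat :: "('n::finite \<Rightarrow> 'a::zero) \<Rightarrow> 'a^'n^'n" where
  "dmat e = (\<chi> i j. if i = j then e i else 0)"

lemma colmat_orth:
  fixes g :: "'n::finite \<Rightarrow> real^'n"
  assumes orth: "\<And>i j. g i \<bullet> g j = (if i = j then 1 else 0)"
  shows "transpose (colmat g) ** colmat g = mat 1" "colmat g ** transpose (colmat g) = mat 1"
proof -
  show 1: "transpose (colmat g) ** colmat g = mat 1"
    using orth by (simp add: vec_eq_iff matrix_matrix_mult_def colmat_def transpose_def mat_def inner_vec_def)
  show "colmat g ** transpose (colmat g) = mat 1"
    using 1 matrix_left_right_inverse by blast
qed

lemma colmat_diag:
  fixes g :: "'n::finite \<Rightarrow> real^'n"
  assumes orth: "\<And>i j. g i \<bullet> g j = (if i = j then 1 else 0)"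
    and ev: "\<And>j. M *v g j = e j *\<^sub>R g j"
  shows "transpose (colmat g) ** M ** colmat g = dmat e"
proof -
  have MP: "M ** colmat g = colmat g ** dmat e"
  proof -
    have "(M ** colmat g) $ i $ j = (colmat g ** dmat e) $ i $ j" for i j
    proof -
      have "(M ** colmat g) $ i $ j = (M *v g j) $ i"
        by (simp add: matrix_matrix_mult_def matrix_vector_mult_def colmat_def)
      also have "\<dots> = e j * g j $ i" using ev by simp
      also have "\<dots> = (colmat g ** dmat e) $ i $ j"
        by (simp add: matrix_matrix_mult_def colmat_def dmat_def if_distrib cong: if_cong)
      finally show ?thesis .
    qed
    then show ?thesis by (simp add: vec_eq_iff)
  qed
  have "transpose (colmat g) ** M ** colmat g = transpose (colmat g) ** (colmat g ** dmat e)"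
    by (simp add: MP matrix_mul_assoc[symmetric])
  also have "\<dots> = dmat e" by (simp add: matrix_mul_assoc colmat_orth[OF orth])
  finally show ?thesis .
qed

lemma dmat_mv: "(dmat e *v x) $ i = e i * (x $ i :: real)"
proof -
  have "(dmat e *v x) $ i = (\<Sum>j\<in>UNIV. (if i = j then e i else 0) * x $ j)"
    by (simp add: dmat_def matrix_vector_mult_def)
  also have "\<dots> = (\<Sum>j\<in>UNIV. if i = j then e i * x $ j else 0)" by (rule sum.cong) auto
  also have "\<dots> = e i * x $ i" by simp
  finally show ?thesis .
qed

lemma rank_dmat: "rank (dmat (e::'n::finite\<Rightarrow>real) :: real^'n::finite^'n) = card {j. e j \<noteq> 0}"
proof -
  have "range (\<lambda>x. dmat e *v x) = {x. \<forall>i. i \<notin> {j. e j \<noteq> 0} \<longrightarrow> x $ i = 0}"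
  proof (intro set_eqI iffI)
    fix y assume "y \<in> range (\<lambda>x. dmat e *v x)"
    then show "y \<in> {x. \<forall>i. i \<notin> {j. e j \<noteq> 0} \<longrightarrow> x $ i = 0}"
      by (auto simp: dmat_mv)
  next
    fix y :: "real^'n" assume y: "y \<in> {x. \<forall>i. i \<notin> {j. e j \<noteq> 0} \<longrightarrow> x $ i = 0}"
    have "y = dmat e *v (\<chi> i. y $ i / e i)"
      using y by (auto simp: vec_eq_iff dmat_mv)
    then show "y \<in> range (\<lambda>x. dmat e *v x)" by blast
  qed
  then have "rank (dmat e) = dim {x::real^'n. \<forall>i. i \<notin> {j. e j \<noteq> 0} \<longrightarrow> x $ i = 0}"
    by (simp only: rank_dim_range)
  also have "\<dots> = card {j. e j \<noteq> 0}"
    using dim_substandard_cart[where 'a=real and 'n='n, of "{j. e j \<noteq> 0}"] by (simp only: dim_vec_eq)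
  finally show ?thesis .
qed

lemma rank_eigen:
  fixes g :: "'n::finite \<Rightarrow> real^'n" and M :: "real^'n^'n"
  assumes orth: "\<And>i j. g i \<bullet> g j = (if i = j then 1 else 0)"
    and ev: "\<And>j. M *v g j = e j *\<^sub>R g j"
  shows "rank M = card {j. e j \<noteq> 0}"
proof -
  let ?P = "colmat g"
  have D: "transpose ?P ** M ** ?P = dmat e" by (rule colmat_diag[OF orth ev])
  have "M = ?P ** (transpose ?P ** M ** ?P) ** transpose ?P"
    by (simp add: matrix_mul_assoc colmat_orth[OF orth])
       (simp add: matrix_mul_assoc[symmetric] colmat_orth[OF orth])
  hence "rank M \<le> rank (dmat e)" unfolding D
    by (metis rank_mul_le_left rank_mul_le_right order_trans)
  moreover have "rank (dmat e) \<le> rank M" unfolding D[symmetric]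
    by (metis rank_mul_le_left rank_mul_le_right order_trans)
  ultimately show ?thesis using rank_dmat by (metis antisym)
qed



lemma eigen_basis:
  fixes A :: "real^'n::finite^'n"
  assumes sym: "transpose A = A" and u: "norm u = 1" and Au: "A *v u = r *\<^sub>R u"
  shows "\<exists>(g :: 'n \<Rightarrow> real^'n) (d :: 'n \<Rightarrow> real) k. (\<forall>i j. g i \<bullet> g j = (if i = j then 1 else 0)) \<and> (\<forall>j. A *v g j = d j *\<^sub>R g j) \<and> g k = u"
proof -
  define U where "U = {y. orthogonal u y}"
  have sU: "subspace U" unfolding U_def by (rule subspace_orthogonal_to_vector)
  have inv: "\<forall>y\<in>U. A *v y \<in> U"
  proof
    fix y assume "y \<in> U"
    moreover have "u \<bullet> (A *v y) = r * (u \<bullet> y)"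
      using sym_mv[OF sym, of u y] Au by simp
    ultimately show "A *v y \<in> U" unfolding U_def orthogonal_def by simp
  qed
  obtain B where B: "B \<subseteq> U" "pairwise orthogonal B" "\<forall>x\<in>B. norm x = 1 \<and> (\<exists>c. A *v x = c *\<^sub>R x)" "U \<subseteq> span B"
    using spectral_subspace[OF sym sU inv] by blast
  define C where "C = insert u B"
  have uu: "u \<bullet> u = 1" using u by (simp add: norm_eq_1)
  have uB: "u \<notin> B" using B(1) uu unfolding U_def orthogonal_def by auto
  have pC: "pairwise orthogonal C" unfolding C_def
    using B(1,2) unfolding U_def by (intro pairwise_orthogonal_insert) auto
  have nC: "\<forall>x\<in>C. norm x = 1 \<and> (\<exists>c. A *v x = c *\<^sub>R x)" unfolding C_def using B(3) u Au by auto
  have z: "0 \<notin> C" using nC by force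
  have indC: "independent C" using pairwise_orthogonal_independent[OF pC z] .
  have fC: "finite C" using pairwise_orthogonal_imp_finite[OF pC] .
  have spC: "span C = UNIV"
  proof -
    have "y \<in> span C" for y
    proof -
      have "y - (u \<bullet> y) *\<^sub>R u \<in> U" unfolding U_def orthogonal_def using uu
        by (simp add: inner_diff_right)
      hence "y - (u \<bullet> y) *\<^sub>R u \<in> span C" using B(4) span_mono[of B C] unfolding C_def by auto
      moreover have "(u \<bullet> y) *\<^sub>R u \<in> span C" unfolding C_def by (simp add: span_base span_scale)
      ultimately have "(y - (u \<bullet> y) *\<^sub>R u) + (u \<bullet> y) *\<^sub>R u \<in> span C" by (rule span_add)
      then show ?thesis by simp
    qed
    then show ?thesis by auto
  qed
  have cardC: "card C = CARD('n)"
  proof -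
    have "card C = dim (span C)" using dim_span_eq_card_independent[OF indC] by simp
    also have "\<dots> = CARD('n)" unfolding spC by simp
    finally show ?thesis .
  qed
  obtain g where g: "bij_betw g (UNIV::'n set) C"
    using finite_same_card_bij[of "UNIV::'n set" C] fC cardC by auto
  define k where "k = inv_into UNIV g u"
  have gk: "g k = u" unfolding k_def using bij_betw_inv_into_right[OF g, of u] C_def by simp
  have gC: "g j \<in> C" for j using bij_betw_apply[OF g] by simp
  have orth: "g i \<bullet> g j = (if i = j then 1 else 0)" for i j
  proof (cases "i = j")
    case True
    then show ?thesis using nC gC[of j] by (simp add: norm_eq_1)
  next
    case False
    then have "g i \<noteq> g j" using bij_betw_imp_inj_on[OF g] unfolding inj_on_def by blast
    then show ?thesis using pC gC[of i] gC[of j] False unfolding pairwise_def orthogonal_def by auto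
  qed
  define d where "d j = (SOME c. A *v g j = c *\<^sub>R g j)" for j
  have ev: "A *v g j = d j *\<^sub>R g j" for j
  proof -
    obtain c where "A *v g j = c *\<^sub>R g j" using nC gC[of j] by blast
    then show ?thesis unfolding d_def by (rule someI)
  qed
  show ?thesis using orth ev gk by blast
qed

lemma order_lin: "order a [:- c, 1:] = (if c = a then 1 else (0::nat))"
proof (cases "c = a")
  case True
  then show ?thesis using order_power_n_n[of a 1] by simp
next
  case False
  then show ?thesis by (simp add: order_0I)
qed

lemma order_prod_lin:
  assumes "finite S"
  shows "order a (\<Prod>j\<in>S. [:- d j, 1::real:]) = card {j\<in>S. d j = a}"
  using assms
proof (induction S rule: finite_induct)
  case empty
  then show ?case by (simp add: order_0I)
next
  case (insert x S)
  have nz0: "(\<Prod>j\<in>S. [:- d j, 1::real:]) \<noteq> 0"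
    using prod_zero_iff[of S "\<lambda>j. [:- d j, 1::real:]"] insert.hyps by auto
  have nz1: "[:- d x, 1::real:] \<noteq> 0" by simp
  have nz: "[:- d x, 1::real:] * (\<Prod>j\<in>S. [:- d j, 1::real:]) \<noteq> 0"
    using nz0 nz1 by (metis mult_eq_0_iff)
  have "order a (\<Prod>j\<in>insert x S. [:- d j, 1::real:]) = order a ([:- d x, 1::real:] * (\<Prod>j\<in>S. [:- d j, 1::real:]))"
    by (subst prod.insert[OF insert.hyps]) (rule refl)
  also have "\<dots> = order a [:- d x, 1:] + order a (\<Prod>j\<in>S. [:- d j, 1::real:])"
    by (rule order_mult[OF nz])
  also have "\<dots> = (if d x = a then 1 else 0) + card {j\<in>S. d j = a}" by (simp only: insert.IH order_lin)
  also have "\<dots> = card {j\<in>insert x S. d j = a}"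
  proof -
    have "{j\<in>insert x S. d j = a} = (if d x = a then insert x {j\<in>S. d j = a} else {j\<in>S. d j = a})" by auto
    then show ?thesis using insert.hyps by simp
  qed
  finally show ?case .
qed

lemma order_list_lin:
  "order a (prod_list (map (\<lambda>x. [:- x, 1::real:]) ls)) = count (mset ls) a"
proof (induction ls)
  case Nil
  then show ?case by (simp add: order_0I)
next
  case (Cons x ls)
  have nz0: "prod_list (map (\<lambda>x. [:- x, 1::real:]) ls) \<noteq> 0"
    by (auto simp: prod_list_zero_iff)
  have nz1: "[:- x, 1::real:] \<noteq> 0" by simp
  have nz: "[:- x, 1::real:] * prod_list (map (\<lambda>x. [:- x, 1::real:]) ls) \<noteq> 0"
    using nz0 nz1 by (metis mult_eq_0_iff)
  have "order a (prod_list (map (\<lambda>x. [:- x, 1::real:]) (x # ls))) = order a ([:- x, 1::real:] * prod_list (map (\<lambda>x. [:- x, 1::real:]) ls))"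
    by (simp only: list.map prod_list.Cons)
  also have "\<dots> = order a [:- x, 1:] + order a (prod_list (map (\<lambda>x. [:- x, 1::real:]) ls))"
    by (rule order_mult[OF nz])
  also have "\<dots> = (if x = a then 1 else 0) + count (mset ls) a" by (simp only: Cons.IH order_lin)
  finally show ?case by simp
qed

definition cm :: "real^'n::finite^'m::finite \<Rightarrow> real poly^'n^'m" where
  "cm A = (\<chi> i j. [:A $ i $ j:])"

lemma cm_mult: "cm (A ** B) = cm A ** cm B"
  by (simp add: cm_def vec_eq_iff matrix_matrix_mult_def mult_to_poly sum_to_poly mult.commute)

lemma cm_transpose: "transpose (cm A) = cm (transpose A)"
  by (simp add: cm_def vec_eq_iff transpose_def)

lemma cm_one: "cm (mat 1 :: real^'n::finite^'n) = mat 1"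
  by (simp add: cm_def vec_eq_iff mat_def)

lemma mat_mult_diff_left: "(A::'a::comm_ring_1^'n::finite^'m::finite) ** (B - C) = A ** B - A ** C"
  by (simp add: vec_eq_iff matrix_matrix_mult_def algebra_simps sum_subtractf)

lemma mat_mult_diff_right: "((B::'a::comm_ring_1^'n::finite^'m::finite) - C) ** A = B ** A - C ** A"
  by (simp add: vec_eq_iff matrix_matrix_mult_def algebra_simps sum_subtractf)

lemma mat_scalar_comm: "mat (x::'a::comm_ring_1) ** (A::'a^'n::finite^'n) = A ** mat x"
proof -
  have "(mat x ** A) $ i $ j = x * A $ i $ j" for i j
  proof -
    have "(mat x ** A) $ i $ j = (\<Sum>k\<in>UNIV. (if i = k then x else 0) * A $ k $ j)"
      by (simp add: matrix_matrix_mult_def mat_def)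
    also have "\<dots> = (\<Sum>k\<in>UNIV. if i = k then x * A $ k $ j else 0)" by (rule sum.cong) auto
    finally show ?thesis by simp
  qed
  moreover have "(A ** mat x) $ i $ j = x * A $ i $ j" for i j
  proof -
    have "(A ** mat x) $ i $ j = (\<Sum>k\<in>UNIV. A $ i $ k * (if k = j then x else 0))"
      by (simp add: matrix_matrix_mult_def mat_def)
    also have "\<dots> = (\<Sum>k\<in>UNIV. if k = j then A $ i $ k * x else 0)" by (rule sum.cong) auto
    finally show ?thesis by (simp add: mult.commute)
  qed
  ultimately show ?thesis by (simp add: vec_eq_iff)
qed

lemma charpoly_eigen:
  fixes g :: "'n::finite \<Rightarrow> real^'n" and A :: "real^'n^'n"
  assumes orth: "\<And>i j. g i \<bullet> g j = (if i = j then 1 else 0)"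
    and ev: "\<And>j. A *v g j = d j *\<^sub>R g j"
  shows "charpoly A = (\<Prod>j\<in>UNIV. [:- d j, 1:])"
proof -
  let ?P = "colmat g" and ?X = "[:0, 1::real:]"
  let ?Q = "cm ?P"
  have N: "(\<chi> i j. (if i = j then ?X else 0) - [:A $ i $ j:]) = mat ?X - cm A"
    by (simp add: vec_eq_iff mat_def cm_def)
  have QQ: "transpose ?Q ** ?Q = mat 1"
    by (simp add: cm_transpose cm_mult[symmetric] colmat_orth[OF orth] cm_one)
  have "transpose ?Q ** (mat ?X - cm A) ** ?Q = transpose ?Q ** mat ?X ** ?Q - transpose ?Q ** cm A ** ?Q"
    by (simp add: mat_mult_diff_left mat_mult_diff_right)
  also have "transpose ?Q ** mat ?X ** ?Q = mat ?X"
  proof -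
    have "transpose ?Q ** mat ?X = mat ?X ** transpose ?Q" by (rule mat_scalar_comm[symmetric])
    hence "transpose ?Q ** mat ?X ** ?Q = mat ?X ** (transpose ?Q ** ?Q)" by (simp add: matrix_mul_assoc)
    also have "\<dots> = mat ?X" by (simp add: QQ)
    finally show ?thesis .
  qed
  also have "transpose ?Q ** cm A ** ?Q = cm (dmat d)"
    by (simp add: cm_transpose cm_mult[symmetric] colmat_diag[OF orth ev])
  finally have eq: "transpose ?Q ** (mat ?X - cm A) ** ?Q = mat ?X - cm (dmat d)" .
  have "det (mat ?X - cm A) = det (transpose ?Q ** (mat ?X - cm A) ** ?Q)"
  proof -
    have "det (transpose ?Q ** (mat ?X - cm A) ** ?Q) = det (mat ?X - cm A) * det (transpose ?Q ** ?Q)"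
      by (simp add: det_mul det_transpose)
    then show ?thesis by (simp add: QQ)
  qed
  also have "\<dots> = det (mat ?X - cm (dmat d))" using eq by simp
  also have "\<dots> = (\<Prod>j\<in>UNIV. [:- d j, 1:])"
    by (subst det_diagonal) (simp_all add: mat_def cm_def dmat_def)
  finally show ?thesis unfolding charpoly_def N .
qed



lemma card_ne:
  "card {j::'n::finite. j \<noteq> k \<and> d j \<noteq> c} = (CARD('n) - 1) - card {j. j \<noteq> k \<and> d j = c}"
proof -
  have "{j::'n. j \<noteq> k \<and> d j \<noteq> c} = (UNIV - {k}) - {j. j \<noteq> k \<and> d j = c}" by auto
  moreover have "card (UNIV - {k::'n}) = CARD('n) - 1" by (simp add: card_Diff_singleton)
  moreover have "{j. j \<noteq> k \<and> d j = c} \<subseteq> UNIV - {k}" by auto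
  ultimately show ?thesis by (simp add: card_Diff_subset)
qed

theorem theorem11:
  fixes E :: "'n::finite \<Rightarrow> 'n \<Rightarrow> bool" and r :: nat and ls :: "real list"
  assumes "simple_graph E"
    and "connected_graph E"
    and "regular E r"
    and "length ls = CARD('n) - 1"
    and "charpoly (adj_matrix E) = [:- real r, 1:] * prod_list (map (\<lambda>x. [:- x, 1:]) ls)"
  shows "mur E = CARD('n) - (Max (insert 0 (count (mset ls) ` set ls)) + 1)"
proof -
  let ?N = "CARD('n)"
  let ?A = "adj_matrix E"
  define m where "m = Max (insert 0 (count (mset ls) ` set ls))"
  have symE: "E i j = E j i" for i j using assms(1) unfolding simple_graph_def by blast
  have symA: "transpose ?A = ?A"
  proof -
    have "(if E j i then 1 else 0::real) = (if E i j then 1 else 0)" for i j using symE[of i j] by simp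
    then show ?thesis by (simp add: adj_matrix_def transpose_def vec_eq_iff)
  qed
  define one :: "real^'n" where "one = (\<chi> i. 1)"
  have deg: "card {j. E i j} = r" for i using assms(3) unfolding regular_def degree_def by blast
  have rowsum: "?A *v one = real r *\<^sub>R one"
  proof -
    have "(?A *v one) $ i = real r" for i
    proof -
      have "(?A *v one) $ i = (\<Sum>j\<in>UNIV. if E i j then (1::real) else 0)"
        by (simp add: adj_matrix_def one_def matrix_vector_mult_def)
      also have "\<dots> = real (card {j. E i j})" by (simp add: sum.If_cases)
      finally show ?thesis using deg by simp
    qed
    then show ?thesis by (simp add: vec_eq_iff one_def)
  qed
  have Npos: "?N > 0" by simp
  have oneone: "one \<bullet> one = real ?N" by (simp add: one_def inner_vec_def)
  have normone: "norm one = sqrt (real ?N)" using oneone by (simp add: norm_eq_sqrt_inner)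
  define u where "u = (1 / sqrt (real ?N)) *\<^sub>R one"
  have nu: "norm u = 1" unfolding u_def using normone Npos by simp
  have Au: "?A *v u = real r *\<^sub>R u" unfolding u_def
    by (simp add: matrix_scaleR_vector_ac scaleR_matrix_vector_assoc[symmetric] rowsum)
  from eigen_basis[OF symA nu Au]
  obtain g :: "'n \<Rightarrow> real^'n" and d :: "'n \<Rightarrow> real" and k :: 'n where orth': "\<forall>i j. g i \<bullet> g j = (if i = j then 1 else (0::real))"
    and ev': "\<forall>j. ?A *v g j = d j *\<^sub>R g j" and gk: "g k = u"
    by blast
  have orth: "\<And>i j. g i \<bullet> g j = (if i = j then 1 else 0)" using orth' by blast
  have ev: "\<And>j. ?A *v g j = d j *\<^sub>R g j" using ev' by blast
  have dk: "d k = real r"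
  proof -
    have "d k *\<^sub>R g k = real r *\<^sub>R g k" using ev[of k] Au gk by metis
    moreover have "g k \<noteq> 0" using nu gk by auto
    ultimately show ?thesis by simp
  qed
  have cp: "charpoly ?A = (\<Prod>j\<in>UNIV. [:- d j, 1:])" by (rule charpoly_eigen[OF orth ev])
  have cnt: "card {j. d j = c} = (if real r = c then 1 else 0) + count (mset ls) c" for c
  proof -
    have nz0: "prod_list (map (\<lambda>x. [:- x, 1::real:]) ls) \<noteq> 0"
      by (auto simp: prod_list_zero_iff)
    have nz1: "[:- real r, 1::real:] \<noteq> 0" by simp
    have nz: "[:- real r, 1::real:] * prod_list (map (\<lambda>x. [:- x, 1::real:]) ls) \<noteq> 0"
      using nz0 nz1 by (metis mult_eq_0_iff)
    have "card {j. d j = c} = order c (charpoly ?A)"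
      using order_prod_lin[of "UNIV::'n set" c d] cp by simp
    also have "\<dots> = order c [:- real r, 1:] + order c (prod_list (map (\<lambda>x. [:- x, 1::real:]) ls))"
      unfolding assms(5) by (rule order_mult[OF nz])
    also have "\<dots> = (if real r = c then 1 else 0) + count (mset ls) c"
      by (simp only: order_lin order_list_lin)
    finally show ?thesis .
  qed
  have cntk: "card {j. j \<noteq> k \<and> d j = c} = count (mset ls) c" for c
  proof (cases "real r = c")
    case True
    have "{j. d j = c} = insert k {j. j \<noteq> k \<and> d j = c}" using True dk by auto
    then have "card {j. d j = c} = Suc (card {j. j \<noteq> k \<and> d j = c})" by simp
    then show ?thesis using cnt[of c] True by simp
  next
    case False
    have "{j. d j = c} = {j. j \<noteq> k \<and> d j = c}" using False dk by auto
    then show ?thesis using cnt[of c] False by simp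
  qed
  have cnt_le: "count (mset ls) c \<le> m" for c
  proof (cases "c \<in> set ls")
    case True
    then show ?thesis unfolding m_def by (intro Max_ge) auto
  next
    case False
    then have "count (mset ls) c = 0" by (simp add: count_eq_zero_iff)
    then show ?thesis by linarith
  qed
  have ones_mv: "ones_matrix *v x = (one \<bullet> x) *\<^sub>R one" for x :: "real^'n"
    by (simp add: vec_eq_iff ones_matrix_def matrix_vector_mult_def inner_vec_def one_def)
  have degm: "deg_matrix E = real r *\<^sub>R mat 1"
    by (simp add: vec_eq_iff deg_matrix_def mat_def degree_def deg)
  have onegk: "one = sqrt (real ?N) *\<^sub>R g k" unfolding gk u_def using Npos by simp
  have ones_g: "ones_matrix *v g j = (if j = k then real ?N else 0) *\<^sub>R g j" for j
  proof -
    have "one \<bullet> g j = sqrt (real ?N) * (if k = j then 1 else 0)"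
      unfolding onegk by (simp add: orth)
    then show ?thesis unfolding ones_mv by (cases "j = k") (auto simp: onegk)
  qed
  define e where "e \<alpha> \<beta> \<gamma> \<delta> j = \<alpha> * d j + \<beta> + \<gamma> * (if j = k then real ?N else 0) + \<delta> * real r" for \<alpha> \<beta> \<gamma> \<delta> j
  have Mev: "universal_adj E \<alpha> \<beta> \<gamma> \<delta> *v g j = e \<alpha> \<beta> \<gamma> \<delta> j *\<^sub>R g j" for \<alpha> \<beta> \<gamma> \<delta> j
  proof -
    have "universal_adj E \<alpha> \<beta> \<gamma> \<delta> *v g j
        = \<alpha> *\<^sub>R (?A *v g j) + \<beta> *\<^sub>R (mat 1 *v g j) + \<gamma> *\<^sub>R (ones_matrix *v g j) + \<delta> *\<^sub>R (deg_matrix E *v g j)"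
      unfolding universal_adj_def
      by (simp only: matrix_vector_mult_add_rdistrib scaleR_matrix_vector_assoc)
    also have "\<dots> = e \<alpha> \<beta> \<gamma> \<delta> j *\<^sub>R g j"
      unfolding ev ones_g degm e_def
      by (simp add: scaleR_matrix_vector_assoc[symmetric] algebra_simps)
    finally show ?thesis .
  qed
  have rk: "rank (universal_adj E \<alpha> \<beta> \<gamma> \<delta>) = card {j. e \<alpha> \<beta> \<gamma> \<delta> j \<noteq> 0}" for \<alpha> \<beta> \<gamma> \<delta>
    by (rule rank_eigen[OF orth Mev])
  have lower: "?N - (m + 1) \<le> rank (universal_adj E \<alpha> \<beta> \<gamma> \<delta>)" if "\<alpha> \<noteq> 0" for \<alpha> \<beta> \<gamma> \<delta>
  proof -
    define c where "c = - (\<beta> + \<delta> * real r) / \<alpha>"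
    have sub: "{j. j \<noteq> k \<and> d j \<noteq> c} \<subseteq> {j. e \<alpha> \<beta> \<gamma> \<delta> j \<noteq> 0}"
    proof
      fix j assume j: "j \<in> {j. j \<noteq> k \<and> d j \<noteq> c}"
      show "j \<in> {j. e \<alpha> \<beta> \<gamma> \<delta> j \<noteq> 0}"
      proof (rule ccontr)
        assume "j \<notin> {j. e \<alpha> \<beta> \<gamma> \<delta> j \<noteq> 0}"
        then have "\<alpha> * d j + \<beta> + \<delta> * real r = 0" using j unfolding e_def by simp
        then have "d j = c" unfolding c_def using that by (simp add: field_simps)
        then show False using j by simp
      qed
    qed
    have "?N - (m + 1) \<le> (?N - 1) - count (mset ls) c" using cnt_le[of c] by simp
    also have "\<dots> = card {j. j \<noteq> k \<and> d j \<noteq> c}" using card_ne[of k d c] cntk[of c] by simp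
    also have "\<dots> \<le> card {j. e \<alpha> \<beta> \<gamma> \<delta> j \<noteq> 0}" by (rule card_mono[OF _ sub]) simp
    finally show ?thesis using rk by simp
  qed
  obtain c0 where c0: "m \<le> count (mset ls) c0"
  proof (cases "m = 0")
    case True then show ?thesis using that by simp
  next
    case False
    have "m \<in> insert 0 (count (mset ls) ` set ls)" unfolding m_def by (intro Max_in) auto
    then show ?thesis using False that by auto
  qed
  define M0 where "M0 = universal_adj E 1 (- c0) ((c0 - real r) / real ?N) 0"
  have upper: "rank M0 \<le> ?N - (m + 1)"
  proof -
    have "{j. e 1 (- c0) ((c0 - real r) / real ?N) 0 j \<noteq> 0} = {j. j \<noteq> k \<and> d j \<noteq> c0}"
      using Npos dk unfolding e_def by auto
    then have "rank M0 = card {j. j \<noteq> k \<and> d j \<noteq> c0}" unfolding M0_def rk by simp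
    also have "\<dots> = (?N - 1) - count (mset ls) c0" using card_ne[of k d c0] cntk[of c0] by simp
    also have "\<dots> \<le> ?N - (m + 1)" using c0 by simp
    finally show ?thesis .
  qed
  define R where "R = {rank (universal_adj E \<alpha> \<beta> \<gamma> \<delta>) | \<alpha> \<beta> \<gamma> \<delta>. \<alpha> \<noteq> 0}"
  have M0R: "rank M0 \<in> R" unfolding R_def M0_def
    by (rule CollectI, rule exI[of _ 1], rule exI[of _ "- c0"], rule exI[of _ "(c0 - real r) / real ?N"], rule exI[of _ 0]) simp
  have finR: "finite R"
  proof (rule finite_subset[of R "{..?N}"])
    show "R \<subseteq> {..?N}" unfolding R_def using rank_bound by fastforce
  qed simp
  have "Min R \<le> ?N - (m + 1)" using Min_le[OF finR M0R] upper by simp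
  moreover have "?N - (m + 1) \<le> Min R"
  proof -
    have "R \<noteq> {}" using M0R by blast
    then have "Min R \<in> R" using Min_in[OF finR] by blast
    then obtain \<alpha> \<beta> \<gamma> \<delta> where "\<alpha> \<noteq> 0" "Min R = rank (universal_adj E \<alpha> \<beta> \<gamma> \<delta>)"
      unfolding R_def by blast
    then show ?thesis using lower by simp
  qed
  ultimately have "Min R = ?N - (m + 1)" by simp
  then show ?thesis unfolding mur_def R_def m_def by simp
qed


end
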